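(* Binary LCP-mergesort, as described in the context, correctly sorts any set $\mathcal{S}$ of $n$ strings and computes its LCP array $H$; it performs at most $L(H) + n\lceil \log_2 n\rceil$ character comparisons and runs in $O(D + n\log n)$ time.
   Context: Strings are finite sequences over a totally ordered alphabet $\Sigma$, terminated by an end-of-string character $0\notin\Sigma$ smaller than all characters; they are ordered lexicographically. $\mathrm{lcp}(s,t)$ is the length of the longest common prefix of $s,t$. For a sorted sequence $s_1\le\dots\le s_n$ its LCP array is $H=(\bot,h_2,\dots,h_n)$ with $h_i=\mathrm{lcp}(s_{i-1},s_i)$, and $L(H)=\sum_{i=2}^n h_i$. The distinguishing prefix size $D$ of $\mathcal{S}$ is the sum over all $s\in\mathcal S$ of the length of the shortest prefix of $s$ (including the terminator if needed) that is not a prefix of any other string of $\mathcal S$ (so $D\ge L(H)$). Let $\varepsilon$ denote the empty string ($\mathrm{lcp}(\varepsilon,s)=0$) and $\infty$ a sentinel string larger than all strings. LCP-Compare: given $(a,s_a,h_a)$ and $(b,s_b,h_b)$ where $h_a=\mathrm{lcp}(p,s_a)$, $h_b=\mathrm{lcp}(p,s_b)$ for some string $p\le s_a,s_b$: if $h_a<h_b$ return $(b,h_b,a,h_a)$; if $h_b<h_a$ return $(a,h_a,b,h_b)$; if $h_a=h_b$, set $h':=h_a$ and compare $s_a[h'+1]$ with $s_b[h'+1]$, incrementing $h'$ while these characters are equal and not the terminator; then return $(a,h_a,b,h')$ if $s_a[h'+1]\le s_b[h'+1]$ and $(b,h_b,a,h')$ otherwise. The returned tuple $(x,h_x,y,h')$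 satisfies $s_x\le s_y$, $\{x,y\}=\{a,b\}$, $h'=\mathrm{lcp}(s_a,s_b)$. Counting convention: each test of the loop condition yielding equality counts as one character comparison, and the final failing test together with the subsequent $\le$ test counts as one (ternary) comparison; cases $h_a\ne h_b$ use no character comparisons. Binary LCP-merge: given sorted $\mathcal S_1,\mathcal S_2$ with LCP arrays $H_1,H_2$ (with sentinel $\infty$ at the end of each), keep indices $i_1,i_2$ (initially 1) and values $h_1=h_2=0$, maintaining $h_k=\mathrm{lcp}(\mathcal S_k[i_k], \text{last output string})$ (last output initially $\varepsilon$). While input remains: call LCP-Compare on $(1,\mathcal S_1[i_1],h_1)$ and $(2,\mathcal S_2[i_2],h_2)$ obtaining $(x,\cdot,y,h')$; append $\mathcal S_x[i_x]$ to the output with LCP entry $h_x$; increment $i_x$; set $h_x:=H_x[i_x]$ and $h_y:=h'$. Binary LCP-mergesort: a set of size $\le 1$ is returned as is; otherwise split into parts of sizes $\lfloor n/2\rfloor$ and $\lceil n/2\rceil$, sort each recursively (with LCP arrays), and combine them with binary LCP-merge. *)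

theory Defs
  imports Complex_Main "HOL-Library.Sublist" "HOL-Library.Multiset"
begin

text \<open>A character position of a
(possibly sentinel) string yields: Term (the end-of-string character 0, smaller than all
characters), Ch c (a character of the alphabet), or Top (the characters of the sentinel
string infinity, larger than all).\<close>

datatype 'a chr = Term | Ch 'a | Top

fun chr_le :: "'a::linorder chr \<Rightarrow> 'a chr \<Rightarrow> bool" where
  "chr_le Term _ = True"
| "chr_le (Ch a) Term = False"
| "chr_le (Ch a) (Ch b) = (a \<le> b)"
| "chr_le (Ch a) Top = True"
| "chr_le Top Top = True"
| "chr_le Top _ = False"

text \<open>Extended strings: Some s is an ordinary string, None is the sentinel infinity.
Positions are 1-indexed as in the paper.\<close>

definition char_at :: "'a list option \<Rightarrow> nat \<Rightarrow> 'a chr" where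
  "char_at x i = (case x of None \<Rightarrow> Top
     | Some s \<Rightarrow> (if 1 \<le> i \<and> i \<le> length s then Ch (s ! (i - 1)) else Term))"

definition tstr :: "'a list \<Rightarrow> 'a chr list" where
  "tstr s = map Ch s @ [Term]"

fun lcp :: "'a list \<Rightarrow> 'a list \<Rightarrow> nat" where
  "lcp (x # xs) (y # ys) = (if x = y then Suc (lcp xs ys) else 0)"
| "lcp _ _ = 0"

text \<open>Lexicographic order (terminator smaller than all characters, so a proper prefix is
smaller): this is lexordp_eq from the library.\<close>

text \<open>L(H): sum of the LCP array entries h_2..h_n (the first entry is bottom).\<close>
definition LH :: "nat list \<Rightarrow> nat" where
  "LH H = sum_list (drop 1 H)"

definition dist_prefix :: "'a list set \<Rightarrow> 'a list \<Rightarrow> nat" where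
  "dist_prefix S s = (LEAST k. \<forall>t \<in> S - {s}. \<not> prefix (take k (tstr s)) (tstr t))"

definition D :: "'a list set \<Rightarrow> nat" where
  "D S = (\<Sum>s\<in>S. dist_prefix S s)"

text \<open>Number of successful equality tests of the inner loop started at h.\<close>
definition scan_len :: "'a list option \<Rightarrow> 'a list option \<Rightarrow> nat \<Rightarrow> nat" where
  "scan_len a b h = (LEAST k. \<not> (char_at a (h + k + 1) = char_at b (h + k + 1)
                                   \<and> char_at a (h + k + 1) \<noteq> Term))"

text \<open>Returns ((x, h_x, y, h'), number of character comparisons).\<close>
definition lcp_compare ::
  "nat \<times> 'a::linorder list option \<times> nat \<Rightarrow> nat \<times> 'a list option \<times> nat
     \<Rightarrow> (nat \<times> nat \<times> nat \<times> nat) \<times> nat" where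
  "lcp_compare A B = (case A of (a, sa, ha) \<Rightarrow> case B of (b, sb, hb) \<Rightarrow>
     if ha < hb then ((b, hb, a, ha), 0)
     else if hb < ha then ((a, ha, b, hb), 0)
     else (let k = scan_len sa sb ha; h' = ha + k in
           if chr_le (char_at sa (h' + 1)) (char_at sb (h' + 1))
           then ((a, ha, b, h'), k + 1) else ((b, hb, a, h'), k + 1)))"

text \<open>A sorted sequence with its LCP array is a list of pairs (string, LCP entry).
The current head of a remaining input (sentinel infinity if exhausted), and the LCP
entry of the next element (the sentinel's entry lcp(last, infinity) = 0).\<close>

definition hd_inf :: "('a list \<times> nat) list \<Rightarrow> 'a list option" where
  "hd_inf xs = (case xs of [] \<Rightarrow> None | (s, _) # _ \<Rightarrow> Some s)"

definition next_h :: "('a list \<times> nat) list \<Rightarrow> nat" where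
  "next_h xs = (case xs of [] \<Rightarrow> 0 | (_, h) # _ \<Rightarrow> h)"

text \<open>lcp_merge xs ys h1 h2 returns (output with LCP entries, character comparisons,
time steps). Each loop iteration costs one step plus its character comparisons.\<close>

function lcp_merge :: "('a::linorder list \<times> nat) list \<Rightarrow> ('a list \<times> nat) list \<Rightarrow> nat \<Rightarrow> nat
    \<Rightarrow> ('a list \<times> nat) list \<times> nat \<times> nat" where
  "lcp_merge xs ys h1 h2 =
    (if xs = [] \<and> ys = [] then ([], 0, 0)
     else (case lcp_compare (1, hd_inf xs, h1) (2, hd_inf ys, h2) of
       ((x, hx, y, h'), c) \<Rightarrow>
         if x = 1 then
           (case xs of [] \<Rightarrow> ([], c, 1 + c)
            | (s, _) # xs' \<Rightarrow> (case lcp_merge xs' ys (next_h xs') h' of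
                 (out, c', t') \<Rightarrow> ((s, hx) # out, c + c', 1 + c + t')))
         else
           (case ys of [] \<Rightarrow> ([], c, 1 + c)
            | (s, _) # ys' \<Rightarrow> (case lcp_merge xs ys' h' (next_h ys') of
                 (out, c', t') \<Rightarrow> ((s, hx) # out, c + c', 1 + c + t')))))"
  by pat_completeness auto
termination
  by (relation "measure (\<lambda>(xs, ys, _, _). length xs + length ys)") auto

text \<open>Returns (sorted sequence with LCP array, character comparisons, time steps).
The first LCP entry (bottom) is represented by 0.\<close>

function lcp_msort :: "'a::linorder list list \<Rightarrow> ('a list \<times> nat) list \<times> nat \<times> nat" where
  "lcp_msort xs =
    (if length xs \<le> 1 then (map (\<lambda>s. (s, 0)) xs, 0, 1)
     else (let m = length xs div 2 in
       case lcp_msort (take m xs) of (l, c1, t1) \<Rightarrow>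
       case lcp_msort (drop m xs) of (r, c2, t2) \<Rightarrow>
       case lcp_merge l r 0 0 of (out, c3, t3) \<Rightarrow>
         (out, c1 + c2 + c3, 1 + t1 + t2 + t3)))"
  by pat_completeness auto
termination
  by (relation "measure length") auto

end

theory Submission
  imports Defs
begin


lemma char_at_Some: "char_at (Some s) (Suc i) = (if i < length s then Ch (s!i) else Term)"
  by (simp add: char_at_def)
lemma char_at_Some1: "char_at (Some s) (i + 1) = (if i < length s then Ch (s!i) else Term)"
  by (simp add: char_at_def)
lemma char_at_None: "char_at None i = Top" by (simp add: char_at_def)

lemma lcp_sym: "lcp a b = lcp b a"
  by (induction a b rule: lcp.induct) auto

lemma lcp_le1: "lcp a b \<le> length a"
  by (induction a b rule: lcp.induct) auto
lemma lcp_le2: "lcp a b \<le> length b"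
  by (induction a b rule: lcp.induct) auto

lemma lcp_nth: "i < lcp a b \<Longrightarrow> a!i = b!i"
  by (induction a b arbitrary: i rule: lcp.induct) (auto split: if_splits nat.splits simp: nth_Cons)

lemma lcp_neq: "lcp a b < length a \<Longrightarrow> lcp a b < length b \<Longrightarrow> a!(lcp a b) \<noteq> b!(lcp a b)"
  by (induction a b rule: lcp.induct) auto

lemma lcp_ultra: "min (lcp a b) (lcp b c) \<le> lcp a c"
proof (induction a b arbitrary: c rule: lcp.induct)
  case (1 x xs y ys)
  then show ?case by (cases c) auto
qed auto

lemma lex_F1: "lexordp_eq (p::'a::linorder list) a \<Longrightarrow> lexordp_eq p b \<Longrightarrow> lcp p a < lcp p b \<Longrightarrow> lexordp_eq b a"
proof (induction p arbitrary: a b)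
  case Nil then show ?case by simp
next
  case (Cons x p)
  from Cons.prems obtain y a' where a: "a = y # a'" by (cases a) auto
  from Cons.prems obtain z b' where b: "b = z # b'" by (cases b) auto
  from Cons.prems b have zx: "z = x" by (auto split: if_splits)
  show ?case
  proof (cases "y = x")
    case True
    then show ?thesis using Cons a b zx by auto
  next
    case False
    then have "x < y \<or> y < x" by (metis neq_iff)
    then show ?thesis using Cons.prems a b zx by auto
  qed
qed

lemma scan_Some: assumes "h \<le> lcp a b" shows "scan_len (Some a) (Some b) h = lcp a b - h"
  unfolding scan_len_def
proof (rule Least_equality)
  have e: "h + (lcp a b - h) + 1 = lcp a b + 1" using assms by simp
  show "\<not> (char_at (Some a) (h + (lcp a b - h) + 1) = char_at (Some b) (h + (lcp a b - h) + 1) \<and>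
         char_at (Some a) (h + (lcp a b - h) + 1) \<noteq> Term)"
    unfolding e char_at_Some1 using lcp_le1[of a b] lcp_le2[of a b] lcp_neq[of a b]
    by (auto split: if_splits)
next
  fix y assume y: "\<not> (char_at (Some a) (h + y + 1) = char_at (Some b) (h + y + 1) \<and>
         char_at (Some a) (h + y + 1) \<noteq> Term)"
  show "lcp a b - h \<le> y"
  proof (rule ccontr)
    assume "\<not> lcp a b - h \<le> y"
    then have l: "h + y < lcp a b" by simp
    then show False using y unfolding char_at_Some1 using lcp_le1[of a b] lcp_le2[of a b] lcp_nth[OF l]
      by (auto split: if_splits)
  qed
qed

lemma scan_None1: "scan_len None (Some b) h = 0"
  unfolding scan_len_def by (rule Least_equality) (auto simp: char_at_def)
lemma scan_None2: "scan_len (Some a) None h = 0"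
  unfolding scan_len_def by (rule Least_equality) (auto simp: char_at_def)

lemma decide: "chr_le (char_at (Some a) (lcp a b + 1)) (char_at (Some b) (lcp a b + 1)) \<longleftrightarrow> lexordp_eq a b"
proof (induction a b rule: lcp.induct)
  case (1 x xs y ys)
  then show ?case by (auto simp: char_at_Some)
next
  case ("2_1" v) then show ?case by (simp add: char_at_Some)
next
  case ("2_2" v) then show ?case by (simp add: char_at_Some)
qed

fun leo :: "'a::linorder list option \<Rightarrow> 'a list option \<Rightarrow> bool" where
  "leo (Some a) (Some b) = lexordp_eq a b" | "leo None (Some b) = False" | "leo _ None = True"
fun lcpo :: "'a list option \<Rightarrow> 'a list option \<Rightarrow> nat" where
  "lcpo (Some a) (Some b) = lcp a b" | "lcpo _ _ = 0"
definition inv1 :: "'a::linorder list \<Rightarrow> 'a list option \<Rightarrow> nat \<Rightarrow> bool" where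
  "inv1 p sa ha = (case sa of None \<Rightarrow> ha = 0 | Some a \<Rightarrow> lexordp_eq p a \<and> ha = lcp p a)"

lemma compare_spec:
  assumes A: "inv1 p sa ha" and B: "inv1 p sb hb" and ne: "sa \<noteq> None \<or> sb \<noteq> None"
    and r: "lcp_compare (1::nat, sa, ha) (2, sb, hb) = ((x,hx,y,h'),c)"
  shows "h' = lcpo sa sb \<and> (if x = 1 then hx = ha \<and> leo sa sb \<and> c + hb \<le> h' + 1
                                  else x = 2 \<and> hx = hb \<and> leo sb sa \<and> c + ha \<le> h' + 1)"
proof (cases sa)
  case None
  with ne obtain b where sb: "sb = Some b" by auto
  from A None have ha: "ha = 0" by (simp add: inv1_def)
  show ?thesis
  proof (cases "hb = 0")
    case True
    then show ?thesis using r None sb ha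
      by (auto simp: lcp_compare_def scan_None1 char_at_None char_at_Some split: if_splits)
  next
    case False
    then show ?thesis using r None sb ha
      by (auto simp: lcp_compare_def split: if_splits)
  qed
next
  case (Some a)
  note sa = Some
  show ?thesis
  proof (cases sb)
    case None
    from B None have hb: "hb = 0" by (simp add: inv1_def)
    show ?thesis
    proof (cases "ha = 0")
      case True
      have "chr_le (char_at (Some a) (0 + 0 + 1)) Top" by (cases "char_at (Some a) (0 + 0 + 1)") auto
      then show ?thesis using r None sa hb True
        by (auto simp: lcp_compare_def scan_None2 char_at_None split: if_splits)
    next
      case False
      then show ?thesis using r None sa hb
        by (auto simp: lcp_compare_def split: if_splits)
    qed
  next
    case (Some b)
    note sb = Some
    from A sa have pa: "lexordp_eq p a" and ha: "ha = lcp p a" by (auto simp: inv1_def)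
    from B sb have pb: "lexordp_eq p b" and hb: "hb = lcp p b" by (auto simp: inv1_def)
    show ?thesis
    proof (cases ha hb rule: linorder_cases)
      case less
      have "lexordp_eq b a" using lex_F1[OF pa pb] less ha hb by simp
      moreover have "lcp a b = ha"
        using lcp_ultra[of a p b] lcp_ultra[of p b a] lcp_sym[of a p] lcp_sym[of b a] less ha hb by linarith
      ultimately show ?thesis using r sa sb less by (auto simp: lcp_compare_def)
    next
      case greater
      have "lexordp_eq a b" using lex_F1[OF pb pa] greater ha hb by simp
      moreover have "lcp a b = hb"
        using lcp_ultra[of b p a] lcp_ultra[of p a b] lcp_sym[of b p] lcp_sym[of b a] greater ha hb by linarith
      ultimately show ?thesis using r sa sb greater by (auto simp: lcp_compare_def)
    next
      case equal
      have le: "ha \<le> lcp a b"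
        using lcp_ultra[of a p b] lcp_sym[of a p] equal ha hb by linarith
      have sc: "scan_len (Some a) (Some b) ha = lcp a b - ha" by (rule scan_Some[OF le])
      have e: "ha + (lcp a b - ha) = lcp a b" using le by simp
      show ?thesis
      proof (cases "lexordp_eq a b")
        case True
        then show ?thesis using r sa sb equal sc e decide[of a b] le
          by (auto simp: lcp_compare_def Let_def)
      next
        case False
        then have "lexordp_eq b a" using lexordp_eq_linear by blast
        then show ?thesis using False r sa sb equal sc e decide[of a b] le lcp_sym[of a b]
          by (auto simp: lcp_compare_def Let_def)
      qed
    qed
  qed
qed



fun chain :: "'a::linorder list \<Rightarrow> ('a list \<times> nat) list \<Rightarrow> bool" where
  "chain p [] = True"
| "chain p ((s,h)#r) = (lexordp_eq p s \<and> h = lcp p s \<and> chain s r)"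

definition LR :: "('a list \<times> nat) list \<Rightarrow> nat" where
  "LR xs = sum_list (map snd (tl xs))"

definition minv :: "'a::linorder list \<Rightarrow> ('a list \<times> nat) list \<Rightarrow> nat \<Rightarrow> bool" where
  "minv p xs h = (case xs of [] \<Rightarrow> h = 0 | (s,_)#r \<Rightarrow> lexordp_eq p s \<and> h = lcp p s \<and> chain s r)"

lemma minv_inv1: "minv p xs h \<Longrightarrow> inv1 p (hd_inf xs) h"
  by (auto simp: minv_def inv1_def hd_inf_def split: list.splits)

lemma sum_next: "sum_list (map snd xs) = next_h xs + LR xs"
  by (cases xs) (auto simp: next_h_def LR_def)

lemma LR_Cons: "LR ((s,e)#xs) = sum_list (map snd xs)"
  by (simp add: LR_def)

lemma minv_next: "chain s xs \<Longrightarrow> minv s xs (next_h xs)"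
  by (cases xs) (auto simp: minv_def next_h_def)

lemma merge_spec:
  "minv p xs h1 \<Longrightarrow> minv p ys h2 \<Longrightarrow> lcp_merge xs ys h1 h2 = (out, c, t) \<Longrightarrow>
   chain p out \<and> mset (map fst out) = mset (map fst xs) + mset (map fst ys)
   \<and> length out = length xs + length ys
   \<and> c + h1 + h2 + LR xs + LR ys \<le> sum_list (map snd out) + length xs + length ys
   \<and> t = c + length xs + length ys"
proof (induction xs ys h1 h2 arbitrary: p out c t rule: lcp_merge.induct)
  case (1 xs ys h1 h2)
  show ?case
  proof (cases "xs = [] \<and> ys = []")
    case True
    then show ?thesis using "1.prems" by (simp add: lcp_merge.simps LR_def minv_def)
  next
    case False
    obtain x hx y h' cs where cmp: "lcp_compare (1, hd_inf xs, h1) (2, hd_inf ys, h2) = ((x,hx,y,h'),cs)"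
      by (metis prod.exhaust)
    have ne: "hd_inf xs \<noteq> None \<or> hd_inf ys \<noteq> None" using False
      by (auto simp: hd_inf_def split: list.splits)
    have spec: "h' = lcpo (hd_inf xs) (hd_inf ys) \<and> (if x = 1 then hx = h1 \<and> leo (hd_inf xs) (hd_inf ys) \<and> cs + h2 \<le> h' + 1
                                  else x = 2 \<and> hx = h2 \<and> leo (hd_inf ys) (hd_inf xs) \<and> cs + h1 \<le> h' + 1)"
      by (rule compare_spec[OF minv_inv1[OF "1.prems"(1)] minv_inv1[OF "1.prems"(2)] ne cmp])
    show ?thesis
    proof (cases "x = 1")
      case True
      obtain s e xs' where xs: "xs = (s,e)#xs'"
      proof (cases xs)
        case Nil
        then have "ys \<noteq> []" using False by auto
        then have "hd_inf ys \<noteq> None" by (auto simp: hd_inf_def split: list.splits)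
        then have "\<not> leo None (hd_inf ys)" by auto
        then show ?thesis using spec True Nil by (simp add: hd_inf_def)
      next
        case (Cons a l) then show ?thesis using that by (cases a) auto
      qed
      obtain out' c' t' where rec: "lcp_merge xs' ys (next_h xs') h' = (out', c', t')"
        by (metis prod.exhaust)
      have eq: "lcp_merge xs ys h1 h2 = ((s,hx)#out', cs + c', 1 + cs + t')"
        using False cmp True xs rec by (subst lcp_merge.simps) simp
      from "1.prems"(1) xs have ps: "lexordp_eq p s" "h1 = lcp p s" "chain s xs'"
        by (auto simp: minv_def)
      have m1: "minv s xs' (next_h xs')" by (rule minv_next[OF ps(3)])
      have m2: "minv s ys h'"
      proof (cases ys)
        case Nil
        then show ?thesis using spec xs by (simp add: minv_def hd_inf_def)
      next
        case (Cons b l)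
        obtain t0 e0 where b: "b = (t0,e0)" by (cases b)
        then show ?thesis using "1.prems"(2) spec xs Cons True
          by (auto simp: minv_def hd_inf_def)
      qed
      have IH: "chain s out' \<and> mset (map fst out') = mset (map fst xs') + mset (map fst ys)
           \<and> length out' = length xs' + length ys
           \<and> c' + next_h xs' + h' + LR xs' + LR ys \<le> sum_list (map snd out') + length xs' + length ys
           \<and> t' = c' + length xs' + length ys"
        using "1.IH"(1)[OF False cmp[symmetric] refl refl refl True xs refl m1 m2 rec] .
      have "LR xs = next_h xs' + LR xs'" using xs sum_next[of xs'] by (simp add: LR_Cons)
      then show ?thesis using IH eq "1.prems"(3) ps spec True xs by auto
    next
      case x2: False
      obtain s e ys' where ys: "ys = (s,e)#ys'"
      proof (cases ys)
        case Nil
        then have "xs \<noteq> []" using False by auto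
        then have "hd_inf xs \<noteq> None" by (auto simp: hd_inf_def split: list.splits)
        then have "\<not> leo None (hd_inf xs)" by auto
        then show ?thesis using spec x2 Nil by (simp add: hd_inf_def)
      next
        case (Cons a l) then show ?thesis using that by (cases a) auto
      qed
      obtain out' c' t' where rec: "lcp_merge xs ys' h' (next_h ys') = (out', c', t')"
        by (metis prod.exhaust)
      have eq: "lcp_merge xs ys h1 h2 = ((s,hx)#out', cs + c', 1 + cs + t')"
        using False cmp x2 ys rec by (subst lcp_merge.simps) simp
      from "1.prems"(2) ys have ps: "lexordp_eq p s" "h2 = lcp p s" "chain s ys'"
        by (auto simp: minv_def)
      have m2: "minv s ys' (next_h ys')" by (rule minv_next[OF ps(3)])
      have m1: "minv s xs h'"
      proof (cases xs)
        case Nil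
        then show ?thesis using spec ys by (simp add: minv_def hd_inf_def)
      next
        case (Cons b l)
        obtain t0 e0 where b: "b = (t0,e0)" by (cases b)
        then show ?thesis using "1.prems"(1) spec ys Cons x2 lcp_sym[of s t0]
          by (auto simp: minv_def hd_inf_def)
      qed
      have IH: "chain s out' \<and> mset (map fst out') = mset (map fst xs) + mset (map fst ys')
           \<and> length out' = length xs + length ys'
           \<and> c' + h' + next_h ys' + LR xs + LR ys' \<le> sum_list (map snd out') + length xs + length ys'
           \<and> t' = c' + length xs + length ys'"
        using "1.IH"(2)[OF False cmp[symmetric] refl refl refl x2 ys refl m1 m2 rec] .
      have "LR ys = next_h ys' + LR ys'" using ys sum_next[of ys'] by (simp add: LR_Cons)
      then show ?thesis using IH eq "1.prems"(3) ps spec x2 ys by auto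
    qed
  qed
qed



definition clog :: "nat \<Rightarrow> nat" where "clog n = nat \<lceil>log 2 (real n)\<rceil>"

lemma clog_iff: assumes "n \<ge> 1" shows "clog n \<le> k \<longleftrightarrow> n \<le> 2^k"
proof -
  have "clog n \<le> k \<longleftrightarrow> log 2 (real n) \<le> real k"
    unfolding clog_def by (simp add: nat_le_iff ceiling_le_iff)
  also have "\<dots> \<longleftrightarrow> real n \<le> 2 powr real k" using assms by (subst log_le_iff) auto
  also have "\<dots> \<longleftrightarrow> real n \<le> 2 ^ k" by (simp add: powr_realpow)
  also have "\<dots> \<longleftrightarrow> n \<le> 2^k"
    by (metis of_nat_le_iff of_nat_numeral of_nat_power)
  finally show ?thesis .
qed

lemma clog_split: assumes "n \<ge> 2"
  shows "clog (n div 2) + 1 \<le> clog n" "clog (n - n div 2) + 1 \<le> clog n" "clog n \<ge> 1"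
proof -
  define K where "K = clog n"
  have nK: "n \<le> 2^K" using clog_iff[of n K] assms K_def by simp
  have K1: "K \<ge> 1" proof (rule ccontr) assume "\<not> K \<ge> 1" then have "K = 0" by simp
    then show False using nK assms by simp qed
  define q where "q = (2::nat)^(K-1)"
  have "2^K = 2 * q" using K1 unfolding q_def by (metis Suc_diff_1 less_le_trans less_numeral_extra(1) power_Suc)
  with nK have nq: "n \<le> 2*q" by simp
  have a: "n - n div 2 \<le> q" using nq by linarith
  have b: "n div 2 \<le> q" using nq by linarith
  have "clog (n - n div 2) \<le> K - 1" using clog_iff[of "n - n div 2" "K-1"] a assms q_def by simp
  then show "clog (n - n div 2) + 1 \<le> clog n" using K1 K_def by simp
  have "clog (n div 2) \<le> K - 1" using clog_iff[of "n div 2" "K-1"] b assms q_def by simp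
  then show "clog (n div 2) + 1 \<le> clog n" using K1 K_def by simp
  show "clog n \<ge> 1" using K1 K_def by simp
qed

lemma clog_real: assumes "n \<ge> 1" shows "real (clog n) \<le> log 2 (real n) + 1"
proof -
  have "log 2 (real n) \<ge> 0" using assms by simp
  then have "real (clog n) = real_of_int \<lceil>log 2 (real n)\<rceil>" unfolding clog_def by simp
  also have "\<dots> \<le> log 2 (real n) + 1" by linarith
  finally show ?thesis .
qed

lemma chain_sorted: "chain p out \<Longrightarrow> sorted_wrt lexordp_eq (map fst out) \<and> (\<forall>s\<in>set (map fst out). lexordp_eq p s)"
proof (induction p out rule: chain.induct)
  case (2 p s h r)
  then show ?case using lexordp_eq_trans by fastforce
qed simp

lemma chain_lcp: "chain p out \<Longrightarrow> i < length out \<Longrightarrow>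
   snd (out!i) = lcp (if i = 0 then p else fst (out!(i-1))) (fst (out!i))"
proof (induction p out arbitrary: i rule: chain.induct)
  case (2 p s h r)
  show ?case
  proof (cases i)
    case 0 then show ?thesis using 2 by simp
  next
    case (Suc j)
    then show ?thesis using 2 by (cases j) auto
  qed
qed simp

lemma LR_LH: "LR xs = LH (map snd xs)"
  by (cases xs) (auto simp: LR_def LH_def)

lemma chain_nil_sum: "chain [] out \<Longrightarrow> sum_list (map snd out) = LH (map snd out)"
  by (cases out) (auto simp: LH_def)

lemma chain_minv: "chain [] l \<Longrightarrow> minv [] l 0"
  by (cases l) (auto simp: minv_def)

lemma sort_spec:
  "lcp_msort xs = (out, c, t) \<Longrightarrow>
   chain [] out \<and> mset (map fst out) = mset xs \<and> length out = length xs
   \<and> c \<le> LH (map snd out) + length xs * clog (length xs)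
   \<and> (if xs = [] then t = 1 else t + 1 \<le> c + length xs * clog (length xs) + 2 * length xs)"
proof (induction xs arbitrary: out c t rule: lcp_msort.induct)
  case (1 xs)
  show ?case
  proof (cases "length xs \<le> 1")
    case True
    then have o: "out = map (\<lambda>s. (s, 0)) xs" "c = 0" "t = 1" using "1.prems" by (simp_all add: lcp_msort.simps)
    show ?thesis
    proof (cases xs)
      case Nil then show ?thesis using o by simp
    next
      case (Cons a l)
      then have "l = []" using True by simp
      then show ?thesis using o Cons by (simp add: clog_def)
    qed
  next
    case False
    define n where "n = length xs"
    define m where "m = length xs div 2"
    obtain l c1 t1 where r1: "lcp_msort (take m xs) = (l, c1, t1)" by (metis prod.exhaust)
    obtain r c2 t2 where r2: "lcp_msort (drop m xs) = (r, c2, t2)" by (metis prod.exhaust)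
    obtain o3 c3 t3 where r3: "lcp_merge l r 0 0 = (o3, c3, t3)" by (metis prod.exhaust)
    have eq: "lcp_msort xs = (o3, c1 + c2 + c3, 1 + t1 + t2 + t3)"
      using False r1 r2 r3 unfolding m_def by (subst lcp_msort.simps) (simp add: Let_def)
    note IH1 = "1.IH"(1)[OF False m_def r1]
    note IH2 = "1.IH"(2)[OF False m_def r1[symmetric] refl r2]
    have n2: "n \<ge> 2" using False n_def by simp
    have lm: "length (take m xs) = m" "length (drop m xs) = n - m" using n_def m_def by auto
    have m1: "m \<ge> 1" "n - m \<ge> 1" using n2 n_def m_def by auto
    have ne1: "take m xs \<noteq> []" "drop m xs \<noteq> []" using lm m1 by auto
    note cs = clog_split[OF n2]
    define K where "K = clog n"
    have K1: "clog m \<le> K - 1" "clog (n - m) \<le> K - 1" "K \<ge> 1"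
      using cs unfolding K_def m_def n_def by auto
    have ar: "m * clog m + (n - m) * clog (n - m) + n \<le> n * K"
    proof -
      have "m * clog m \<le> m * (K - 1)" using K1 by (intro mult_le_mono2) 
      moreover have "(n - m) * clog (n - m) \<le> (n - m) * (K - 1)" using K1 by (intro mult_le_mono2)
      moreover have "m * (K - 1) + (n - m) * (K - 1) + n = n * K"
      proof -
        have "m * (K - 1) + (n - m) * (K - 1) = n * (K - 1)" using m_def n_def
          by (metis add_mult_distrib le_add_diff_inverse div_le_dividend)
        moreover have "n * (K - 1) + n = n * K" using K1 by (cases K) auto
        ultimately show ?thesis by simp
      qed
      ultimately show ?thesis by linarith
    qed
    from IH1 have i1: "chain [] l" "mset (map fst l) = mset (take m xs)" "length l = m"
      "c1 \<le> LH (map snd l) + m * clog m" "t1 + 1 \<le> c1 + m * clog m + 2 * m"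
      using lm ne1 by auto
    from IH2 have i2: "chain [] r" "mset (map fst r) = mset (drop m xs)" "length r = n - m"
      "c2 \<le> LH (map snd r) + (n - m) * clog (n - m)" "t2 + 1 \<le> c2 + (n - m) * clog (n - m) + 2 * (n - m)"
      using lm ne1 by auto
    note ms = merge_spec[OF chain_minv[OF i1(1)] chain_minv[OF i2(1)] r3]
    have o: "out = o3" "c = c1 + c2 + c3" "t = 1 + t1 + t2 + t3" using eq "1.prems" by auto
    have s3: "sum_list (map snd o3) = LH (map snd o3)" using ms chain_nil_sum by blast
    have c3: "c3 + LH (map snd l) + LH (map snd r) \<le> LH (map snd o3) + n"
      using ms s3 i1 i2 m1 by (simp add: LR_LH)
    have t3: "t3 = c3 + n" using ms i1 i2 m1 by simp
    have mm: "mset (map fst o3) = mset xs"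
      using ms i1 i2 by (metis mset_append append_take_drop_id)
    have ln: "length o3 = n" using ms i1 i2 m1 by simp
    have "c \<le> LH (map snd out) + n * K" unfolding o(1,2) using c3 i1(4) i2(4) ar by linarith
    moreover have "t + 1 \<le> c + n * K + 2 * n" unfolding o(2,3) using t3 i1(5) i2(5) ar m1 by linarith
    ultimately show ?thesis using o ms mm ln False n_def K_def by auto
  qed
qed



lemma tstr_prefix_eq: "prefix (map Ch s @ [Term]) (map Ch u @ [Term]) \<Longrightarrow> s = u"
proof (induction s arbitrary: u)
  case Nil then show ?case
    by (cases u) (simp_all only: list.map append_Cons append_Nil Cons_prefix_Cons chr.distinct simp_thms)
next
  case (Cons a s)
  show ?case
  proof (cases u)
    case Nil
    have "prefix (Ch a # (map Ch s @ [Term])) (Term # [])" using Cons.prems Nil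
      by (simp only: list.map append_Cons append_Nil)
    then show ?thesis by (simp only: Cons_prefix_Cons chr.distinct simp_thms)
  next
    case (Cons b u')
    have "prefix (Ch a # (map Ch s @ [Term])) (Ch b # (map Ch u' @ [Term]))" using Cons.prems Cons
      by (simp only: list.map append_Cons)
    then have "a = b" "prefix (map Ch s @ [Term]) (map Ch u' @ [Term])"
      by (simp_all only: Cons_prefix_Cons chr.inject)
    then show ?thesis using Cons.IH Cons by blast
  qed
qed

lemma take_lcp: "k \<le> lcp s t \<Longrightarrow> take k s = take k t"
proof (induction s t arbitrary: k rule: lcp.induct)
  case (1 x xs y ys)
  show ?case
  proof (cases "x = y")
    case True
    show ?thesis
    proof (cases k)
      case 0 then show ?thesis by simp
    next
      case (Suc k')
      then have "k' \<le> lcp xs ys" using "1.prems" True by simp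
      then show ?thesis using "1.IH"[OF True] Suc True by simp
    qed
  next
    case False then show ?thesis using "1.prems" by simp
  qed
qed auto

lemma dist_gt: assumes "s \<in> S" "t \<in> S" "s \<noteq> t" shows "lcp s t < dist_prefix S s"
proof -
  let ?P = "\<lambda>k. \<forall>u \<in> S - {s}. \<not> prefix (take k (tstr s)) (tstr u)"
  have tl: "take (length s + 1) (tstr s) = tstr s" by (simp add: tstr_def)
  have "?P (length s + 1)" unfolding tl
  proof (intro ballI notI)
    fix u assume "u \<in> S - {s}" "prefix (tstr s) (tstr u)"
    then show False using tstr_prefix_eq unfolding tstr_def by blast
  qed
  then have P: "?P (dist_prefix S s)" unfolding dist_prefix_def by (rule LeastI)
  show ?thesis
  proof (rule ccontr)
    assume "\<not> lcp s t < dist_prefix S s"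
    then have k: "dist_prefix S s \<le> lcp s t" by simp
    have "take (dist_prefix S s) (tstr s) = map Ch (take (dist_prefix S s) s)"
      using k lcp_le1[of s t] by (simp add: tstr_def take_map)
    also have "\<dots> = map Ch (take (dist_prefix S s) t)" using take_lcp[OF k] by simp
    also have "\<dots> = take (dist_prefix S s) (tstr t)"
      using k lcp_le2[of s t] by (simp add: tstr_def take_map)
    finally have "prefix (take (dist_prefix S s) (tstr s)) (tstr t)" by (metis take_is_prefix)
    then show False using P assms by blast
  qed
qed

lemma chain_LH: "chain p out \<Longrightarrow> distinct (map fst out) \<Longrightarrow> set (map fst out) \<subseteq> S \<Longrightarrow>
   sum_list (map snd (tl out)) \<le> (\<Sum>s\<in>set (map fst (tl out)). dist_prefix S s)"
proof (induction p out rule: chain.induct)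
  case (2 p s h r)
  show ?case
  proof (cases r)
    case Nil then show ?thesis by simp
  next
    case (Cons b r')
    obtain s' h' where b: "b = (s', h')" by (cases b)
    have IH: "sum_list (map snd r') \<le> (\<Sum>s\<in>set (map fst r'). dist_prefix S s)"
      using 2 Cons b by simp
    have h': "h' = lcp s s'" using 2 Cons b by simp
    have "lcp s s' < dist_prefix S s'" using 2 Cons b dist_gt[of s' S s] lcp_sym[of s s'] by auto
    moreover have "s' \<notin> set (map fst r')" using 2 Cons b by simp
    ultimately show ?thesis using IH h' Cons b by simp
  qed
qed simp

theorem mainTheorem3:
  shows "(\<forall>xs :: 'a::linorder list list. distinct xs \<longrightarrow>
           (case lcp_msort xs of (out, cmps, _) \<Rightarrow>
              mset (map fst out) = mset xs
            \<and> sorted_wrt lexordp_eq (map fst out)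
            \<and> (\<forall>i. 0 < i \<and> i < length xs \<longrightarrow>
                   snd (out ! i) = lcp (fst (out ! (i - 1))) (fst (out ! i)))
            \<and> cmps \<le> LH (map snd out) + length xs * nat \<lceil>log 2 (real (length xs))\<rceil>))
       \<and> (\<exists>c :: real. \<forall>xs :: 'a list list. distinct xs \<longrightarrow>
           real (snd (snd (lcp_msort xs)))
             \<le> c * (real (D (set xs)) + real (length xs) * log 2 (real (length xs)) + 1))"
proof
  show "\<forall>xs :: 'a::linorder list list. distinct xs \<longrightarrow>
           (case lcp_msort xs of (out, cmps, _) \<Rightarrow>
              mset (map fst out) = mset xs
            \<and> sorted_wrt lexordp_eq (map fst out)
            \<and> (\<forall>i. 0 < i \<and> i < length xs \<longrightarrow>
                   snd (out ! i) = lcp (fst (out ! (i - 1))) (fst (out ! i)))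
            \<and> cmps \<le> LH (map snd out) + length xs * nat \<lceil>log 2 (real (length xs))\<rceil>)"
  proof (intro allI impI)
    fix xs :: "'a list list"
    obtain out c t where r: "lcp_msort xs = (out, c, t)" by (metis prod.exhaust)
    note S = sort_spec[OF r]
    show "case lcp_msort xs of (out, cmps, _) \<Rightarrow>
              mset (map fst out) = mset xs
            \<and> sorted_wrt lexordp_eq (map fst out)
            \<and> (\<forall>i. 0 < i \<and> i < length xs \<longrightarrow>
                   snd (out ! i) = lcp (fst (out ! (i - 1))) (fst (out ! i)))
            \<and> cmps \<le> LH (map snd out) + length xs * nat \<lceil>log 2 (real (length xs))\<rceil>"
    proof -
      have ch: "chain [] out" and ms: "mset (map fst out) = mset xs" and ln: "length out = length xs"
        and cb: "c \<le> LH (map snd out) + length xs * clog (length xs)" using S by auto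
      have so: "sorted_wrt lexordp_eq (map fst out)" using chain_sorted[OF ch] by blast
      have li: "\<forall>i. 0 < i \<and> i < length xs \<longrightarrow>
                   snd (out ! i) = lcp (fst (out ! (i - 1))) (fst (out ! i))"
      proof (intro allI impI)
        fix i assume "0 < i \<and> i < length xs"
        then show "snd (out ! i) = lcp (fst (out ! (i - 1))) (fst (out ! i))"
          using chain_lcp[OF ch, of i] ln by simp
      qed
      have cb': "c \<le> LH (map snd out) + length xs * nat \<lceil>log 2 (real (length xs))\<rceil>"
        using cb unfolding clog_def .
      show ?thesis unfolding r using ms so li cb' by simp
    qed
  qed
next
  show "\<exists>c :: real. \<forall>xs :: 'a list list. distinct xs \<longrightarrow>
           real (snd (snd (lcp_msort xs)))
             \<le> c * (real (D (set xs)) + real (length xs) * log 2 (real (length xs)) + 1)"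
  proof (intro exI allI impI)
    fix xs :: "'a list list"
    assume dxs: "distinct xs"
    obtain out c t where r: "lcp_msort xs = (out, c, t)" by (metis prod.exhaust)
    note S = sort_spec[OF r]
    define n where "n = length xs"
    have fin: "finite (set xs)" by simp
    have Dnn: "D (set xs) \<ge> 0" by simp
    show "real (snd (snd (lcp_msort xs)))
             \<le> 5 * (real (D (set xs)) + real (length xs) * log 2 (real (length xs)) + 1)"
    proof (cases "xs = []")
      case True
      then show ?thesis using S r by simp
    next
      case False
      then have n1: "n \<ge> 1" using n_def by (cases xs) auto
      have dout: "distinct (map fst out)" using S dxs mset_eq_imp_distinct_iff by blast
      have sout: "set (map fst out) = set xs" using S by (metis set_mset_mset)
      have LHD: "LH (map snd out) \<le> D (set xs)"
      proof -
        have sub: "set (map fst (tl out)) \<subseteq> set xs" using sout by (cases out) auto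
        have "LH (map snd out) = sum_list (map snd (tl out))" by (simp add: LH_def drop_Suc map_tl)
        also have "\<dots> \<le> (\<Sum>s\<in>set (map fst (tl out)). dist_prefix (set xs) s)"
          using chain_LH[of "[]" out "set xs"] S dout sout by simp
        also have "\<dots> \<le> (\<Sum>s\<in>set xs. dist_prefix (set xs) s)"
          using sub by (intro sum_mono2) auto
        finally show ?thesis by (simp add: D_def)
      qed
      have nD: "n \<le> D (set xs) + 1"
      proof (cases "n \<ge> 2")
        case False then show ?thesis by simp
      next
        case True
        have "\<forall>s\<in>set xs. 1 \<le> dist_prefix (set xs) s"
        proof
          fix s assume s: "s \<in> set xs"
          have "card (set xs) \<ge> 2" using True dxs n_def by (simp add: distinct_card)
          then have "card (set xs - {s}) > 0" using s by (simp add: card_Diff_singleton)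
          then have "set xs - {s} \<noteq> {}" by (metis card.empty less_irrefl)
          then obtain u where "u \<in> set xs" "u \<noteq> s" by blast
          then show "1 \<le> dist_prefix (set xs) s" using dist_gt[OF s] by fastforce
        qed
        then have "(\<Sum>s\<in>set xs. (1::nat)) \<le> D (set xs)" unfolding D_def by (intro sum_mono) auto
        then show ?thesis using dxs n_def by (simp add: distinct_card)
      qed
      have tb: "t + 1 \<le> c + n * clog n + 2 * n" "c \<le> LH (map snd out) + n * clog n"
        using S False n_def by auto
      define K where "K = clog n"
      define DD where "DD = D (set xs)"
      have nat1: "t + 1 \<le> DD + 2 * (n * K) + 2 * n" using tb LHD unfolding K_def DD_def by linarith
      have "real (t + 1) \<le> real (DD + 2 * (n * K) + 2 * n)" using nat1 by (simp only: of_nat_le_iff)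
      then have r1: "real t + 1 \<le> real DD + 2 * (real n * real K) + 2 * real n" by simp
      have r2: "real n * real K \<le> real n * log 2 (real n) + real n"
      proof -
        have "real n * real K \<le> real n * (log 2 (real n) + 1)"
          using clog_real[OF n1] unfolding K_def by (intro mult_left_mono) auto
        then show ?thesis by (simp add: distrib_left)
      qed
      have r3: "real n \<le> real DD + 1" using nD unfolding DD_def by linarith
      have r4: "real n * log 2 (real n) \<ge> 0" using n1 by simp
      have "real t \<le> 5 * real DD + 5 * (real n * log 2 (real n)) + 5"
        using r1 r2 r3 r4 by linarith
      then have "real t \<le> 5 * (real (D (set xs)) + real n * log 2 (real n) + 1)"
        unfolding DD_def by (simp add: algebra_simps)
      then show ?thesis using r n_def by simp
    qed
  qed
qed


end
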